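(* Let $\epsilon=\epsilon_1\cdots\epsilon_n$ be the reversal of an inversion sequence (equivalently, an integer sequence with $0\le\epsilon_i\le n-i$ for all $i$), and let $\epsilon'$ be the sequence obtained by applying Algorithm A (described below) to $\epsilon$. Then $\epsilon'$ is also the reversal of an inversion sequence.
   Context: An inversion sequence of length $n$ is an integer sequence $\epsilon_1\cdots\epsilon_n$ with $0\le\epsilon_i<i$ for all $i$; its reversal is $\epsilon_n\cdots\epsilon_1$. The reduction of an integer word replaces each occurrence of its $k$-th smallest distinct value by $k-1$; a consecutive pattern $\underline{p_1p_2p_3p_4}$ occurs in a sequence at position $i$ if the reduction of its entries in positions $i,\dots,i+3$ equals $p_1p_2p_3p_4$. Let $p=\underline{0102}$ and $q=\underline{0112}$. Algorithm A, on input an integer sequence $\mathrm{seq}=\epsilon_1\cdots\epsilon_n$: let $E_p$, $E_q$ be the sets of positions of occurrences of $p$, resp. $q$, in the input sequence; set $\mathrm{last}:=$ null. For $i=1,2,\dots,n$ in order: let $N_p,N_q$ be the sets of positions of occurrences of $p$, resp. $q$, in the current sequence. If $i-2\in E_p$: set $\mathrm{last}:=\mathrm{seq}[i]$ and $\mathrm{seq}[i]:=\mathrm{seq}[i-1]$. Else if $i-2\in E_q$: set $\mathrm{last}:=\mathrm{seq}[i]$ and $\mathrm{seq}[i]:=\mathrm{seq}[i-2]$. Else if $i-2\in N_p$ or $i-2\in N_q$: swap the values of $\mathrm{seq}[i]$ and $\mathrm{last}$. Output $\mathrm{seq}$. *)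

theory Defs
  imports Main
begin

(* Sequences are lists; position i (1-based, as in the paper) is entry  xs ! (i - 1). *)

definition reduction :: "'a::linorder list \<Rightarrow> nat list" where
  "reduction w = map (\<lambda>x. card {y \<in> set w. y < x}) w"

definition occurs_at :: "nat list \<Rightarrow> 'a::linorder list \<Rightarrow> nat \<Rightarrow> bool" where
  "occurs_at pat w i \<longleftrightarrow> 1 \<le> i \<and> i + 3 \<le> length w \<and> reduction (take 4 (drop (i - 1) w)) = pat"

definition pat_p :: "nat list" where "pat_p = [0,1,0,2]"
definition pat_q :: "nat list" where "pat_q = [0,1,1,2]"

(* One iteration (index i) of Algorithm A. orig is the input sequence (used for E_p, E_q);
   the state is (current sequence, last), last = None meaning null. *)
definition stepA :: "'a::linorder list \<Rightarrow> 'a list \<times> 'a option \<Rightarrow> nat \<Rightarrow> 'a list \<times> 'a option" where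
  "stepA orig st i =
     (let s = fst st; last = snd st in
      if occurs_at pat_p orig (i - 2) then (s[i - 1 := s ! (i - 2)], Some (s ! (i - 1)))
      else if occurs_at pat_q orig (i - 2) then (s[i - 1 := s ! (i - 3)], Some (s ! (i - 1)))
      else if occurs_at pat_p s (i - 2) \<or> occurs_at pat_q s (i - 2) then
        (case last of Some v \<Rightarrow> (s[i - 1 := v], Some (s ! (i - 1))) | None \<Rightarrow> (s, last))
      else (s, last))"

definition algA :: "'a::linorder list \<Rightarrow> 'a list" where
  "algA xs = fst (foldl (stepA xs) (xs, None) [1..<length xs + 1])"

definition inversion_seq :: "nat list \<Rightarrow> bool" where
  "inversion_seq e \<longleftrightarrow> (\<forall>i<length e. e ! i < i + 1)"

definition rev_inversion_seq :: "nat list \<Rightarrow> bool" where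
  "rev_inversion_seq e \<longleftrightarrow> inversion_seq (rev e)"

end

theory Submission
  imports Defs
begin

lemma card0D: "card {y \<in> S. y < (x::nat)} = 0 \<Longrightarrow> finite S \<Longrightarrow> y \<in> S \<Longrightarrow> \<not> y < x"
  by auto
lemma card1D: "card {y \<in> S. y < (x::nat)} = Suc 0 \<Longrightarrow> \<exists>y\<in>S. y < x"
  by (metis (no_types, lifting) One_nat_def card_1_singletonE insertI1 mem_Collect_eq)
lemma card_monoD: "finite S \<Longrightarrow> d \<le> (b::nat) \<Longrightarrow> card {y\<in>S. y<d} \<le> card {y\<in>S. y<b}"
  by (rule card_mono) auto
lemma card2: "finite S \<Longrightarrow> a \<in> S \<Longrightarrow> b \<in> S \<Longrightarrow> a < b \<Longrightarrow> b < (c::nat) \<Longrightarrow> 2 \<le> card {y\<in>S. y<c}"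
proof -
  assume h: "finite S" "a \<in> S" "b \<in> S" "a < b" "b < c"
  have "card {a,b} \<le> card {y\<in>S. y<c}" using h by (intro card_mono) auto
  thus ?thesis using h by simp
qed

lemma red_p: "reduction [a,b,c,d::nat] = pat_p \<Longrightarrow> a < b \<and> a = c \<and> b < d"
proof -
  let ?S = "{a,b,c,d}"
  assume "reduction [a,b,c,d::nat] = pat_p"
  hence h: "card {y\<in>?S. y<a} = 0" "card {y\<in>?S. y<b} = 1" "card {y\<in>?S. y<c} = 0" "card {y\<in>?S. y<d} = 2"
    by (simp_all add: reduction_def pat_p_def)
  have f: "finite ?S" by simp
  have ma: "\<not> y < a" if "y \<in> ?S" for y using card0D[OF h(1) f that] .
  have mc: "\<not> y < c" if "y \<in> ?S" for y using card0D[OF h(3) f that] .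
  have ac: "a = c" using ma[of c] mc[of a] by auto
  obtain y where "y \<in> ?S" "y < b" using card1D[of ?S b] h(2) by auto
  hence ab: "a < b" using ma[of y] by auto
  have bd: "b < d"
  proof (rule ccontr)
    assume "\<not> b < d"
    hence "card {y\<in>?S. y<d} \<le> card {y\<in>?S. y<b}" using card_monoD[OF f] by simp
    thus False using h by simp
  qed
  show ?thesis using ab ac bd by simp
qed

lemma red_q: "reduction [a,b,c,d::nat] = pat_q \<Longrightarrow> a < b \<and> b = c \<and> c < d"
proof -
  let ?S = "{a,b,c,d}"
  assume "reduction [a,b,c,d::nat] = pat_q"
  hence h: "card {y\<in>?S. y<a} = 0" "card {y\<in>?S. y<b} = 1" "card {y\<in>?S. y<c} = 1" "card {y\<in>?S. y<d} = 2"
    by (simp_all add: reduction_def pat_q_def)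
  have f: "finite ?S" by simp
  have ma: "\<not> y < a" if "y \<in> ?S" for y using card0D[OF h(1) f that] .
  obtain y where "y \<in> ?S" "y < b" using card1D[of ?S b] h(2) by auto
  hence ab: "a < b" using ma[of y] by auto
  have bc: "b = c"
  proof (rule ccontr)
    assume "b \<noteq> c"
    hence "b < c \<or> c < b" by auto
    thus False
    proof
      assume "b < c" thus False using card2[OF f, of a b c] ab h by simp
    next
      assume "c < b"
      obtain z where "z \<in> ?S" "z < c" using card1D[of ?S c] h(3) by auto
      hence "a < c" using ma[of z] by auto
      thus False using card2[OF f, of a c b] \<open>c < b\<close> h by simp
    qed
  qed
  have cd: "c < d"
  proof (rule ccontr)
    assume "\<not> c < d"
    hence "card {y\<in>?S. y<d} \<le> card {y\<in>?S. y<c}" using card_monoD[OF f] by simp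
    thus False using h by simp
  qed
  show ?thesis using ab bc cd by simp
qed

lemma take4: "k + 4 \<le> length w \<Longrightarrow> take 4 (drop k w) = [w!k, w!(k+1), w!(k+2), w!(k+3)]"
  by (simp add: take_Suc_conv_app_nth numeral_eq_Suc)

lemma occurs_nth: "occurs_at pat w k \<longleftrightarrow> 1 \<le> k \<and> k + 3 \<le> length w \<and>
   reduction [w!(k-1), w!k, w!(k+1), w!(k+2)] = pat"
proof (cases k)
  case (Suc m)
  then show ?thesis unfolding occurs_at_def using take4[of m w]
    by (auto simp: add.commute numeral_eq_Suc)
qed (simp add: occurs_at_def)

lemma occurs_nth3: "occurs_at pat w (m+1) \<longleftrightarrow> m + 4 \<le> length w \<and>
   reduction [w!m, w!(m+1), w!(m+2), w!(m+3)] = pat"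
  unfolding occurs_nth by (simp add: numeral_eq_Suc)

lemma rev_inv_iff: "rev_inversion_seq e \<longleftrightarrow> (\<forall>t<length e. e!t + t < length e)"
  unfolding rev_inversion_seq_def inversion_seq_def
proof (intro iffI allI impI)
  fix t assume h: "\<forall>i<length (rev e). rev e ! i < i + 1" and t: "t < length e"
  have "rev e ! (length e - 1 - t) < length e - 1 - t + 1" using h t by simp
  thus "e!t + t < length e" using t by (simp add: rev_nth)
next
  fix i assume h: "\<forall>t<length e. e!t + t < length e" and i: "i < length (rev e)"
  have "length e - 1 - i < length e" using i by simp
  hence "e ! (length e - 1 - i) + (length e - 1 - i) < length e" using h by blast
  thus "rev e ! i < i + 1" using i by (simp add: rev_nth)
qed

definition Inv :: "nat list \<Rightarrow> nat \<Rightarrow> nat list \<times> nat option \<Rightarrow> bool" where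
 "Inv oo j st \<longleftrightarrow> (length (fst st) = length oo \<and>
   (\<forall>t. j \<le> t \<longrightarrow> t < length oo \<longrightarrow> fst st!t = oo!t) \<and>
   (\<forall>t<length oo. fst st!t \<le> oo!t \<or> (t+1 < length oo \<and> fst st!t < oo!(t+1))) \<and>
   (\<forall>v. snd st = Some v \<longrightarrow> (length oo \<le> j \<or> (j < length oo \<and> v < oo!j)
      \<or> (1 \<le> j \<and> v < fst st!(j-1) \<and> fst st!(j-1) = oo!(j-1))
      \<or> (2 \<le> j \<and> fst st!(j-1) = oo!(j-1) \<and> fst st!(j-2) = oo!(j-2)))))"

lemma pq_s: "occurs_at pat_p (w::nat list) k \<or> occurs_at pat_q w k \<Longrightarrow>
  1 \<le> k \<and> k + 3 \<le> length w \<and> w!(k-1) < w!(k+2) \<and> w!k < w!(k+2) \<and> w!(k+1) < w!(k+2)"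
  unfolding occurs_nth using red_p red_q by fastforce

lemma inv_branch:
  assumes len: "length s = length oo" and J1: "\<And>t. m+2 \<le> t \<Longrightarrow> t < length oo \<Longrightarrow> s!t = oo!t"
    and J3: "\<And>t. t < length oo \<Longrightarrow> s!t \<le> oo!t \<or> (t+1 < length oo \<and> s!t < oo!(t+1))"
    and x: "x < oo!(m+3)" and mn: "m+3 < length oo" and oi: "oo!(m+2) < oo!(m+3)"
  shows "Inv oo (m+3) (s[m+2 := x], Some (oo!(m+2)))"
  unfolding Inv_def fst_conv snd_conv
proof (intro conjI allI impI)
  show "length (s[m+2 := x]) = length oo" using len by simp
next
  fix t assume "m+3 \<le> t" "t < length oo" thus "s[m+2 := x]!t = oo!t" using J1 by simp
next
  fix t assume t: "t < length oo"
  show "s[m+2 := x]!t \<le> oo!t \<or> (t+1 < length oo \<and> s[m+2 := x]!t < oo!(t+1))"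
  proof (cases "t = m+2")
    case True thus ?thesis using x mn len by (simp add: numeral_eq_Suc)
  next
    case False thus ?thesis using J3[OF t] by simp
  qed
next
  fix v assume "Some (oo!(m+2)) = Some v"
  thus "length oo \<le> m+3 \<or> (m+3 < length oo \<and> v < oo!(m+3)) \<or>
    (1 \<le> m+3 \<and> v < s[m+2 := x]!(m+3-1) \<and> s[m+2 := x]!(m+3-1) = oo!(m+3-1)) \<or>
    (2 \<le> m+3 \<and> s[m+2 := x]!(m+3-1) = oo!(m+3-1) \<and> s[m+2 := x]!(m+3-2) = oo!(m+3-2))"
    using mn oi by simp
qed

lemma step_inv:
  assumes i: "1 \<le> i" "i \<le> length oo" and inv: "Inv oo (i-1) (s,l)"
  shows "Inv oo i (stepA oo (s,l) i)"
proof -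
  let ?n = "length oo"
  from inv have len: "length s = ?n"
    and J1: "\<And>t. i-1 \<le> t \<Longrightarrow> t < ?n \<Longrightarrow> s!t = oo!t"
    and J3: "\<And>t. t < ?n \<Longrightarrow> s!t \<le> oo!t \<or> (t+1 < ?n \<and> s!t < oo!(t+1))"
    and L: "\<And>v. l = Some v \<Longrightarrow> (?n \<le> i-1 \<or> (i-1 < ?n \<and> v < oo!(i-1))
      \<or> (1 \<le> i-1 \<and> v < s!(i-1-1) \<and> s!(i-1-1) = oo!(i-1-1))
      \<or> (2 \<le> i-1 \<and> s!(i-1-1) = oo!(i-1-1) \<and> s!(i-1-2) = oo!(i-1-2)))"
    unfolding Inv_def by auto
  show ?thesis
  proof (cases "occurs_at pat_p oo (i-2)")
    case True
    then obtain m where m: "i = m+3" "m+4 \<le> ?n" and r: "reduction [oo!m, oo!(m+1), oo!(m+2), oo!(m+3)] = pat_p"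
    proof -
      from True have a: "1 \<le> i-2" "i-2+3 \<le> ?n" "reduction [oo!(i-2-1), oo!(i-2), oo!(i-2+1), oo!(i-2+2)] = pat_p"
        unfolding occurs_nth by auto
      have "\<exists>m. i = m+3" using a(1) by arith
      then obtain m where i3: "i = m+3" by blast
      show ?thesis using that[of m] a unfolding i3 by (simp add: numeral_eq_Suc)
    qed
    have oo: "oo!m < oo!(m+1)" "oo!m = oo!(m+2)" "oo!(m+1) < oo!(m+3)" using red_p[OF r] by auto
    have st: "stepA oo (s,l) i = (s[m+2 := s!(m+1)], Some (s!(m+2)))"
      using True m unfolding stepA_def by simp
    have s2: "s!(m+2) = oo!(m+2)" using J1 m by simp
    have s1: "s!(m+1) < oo!(m+3)" using J3[of "m+1"] m oo by auto
    have "Inv oo (m+3) (s[m+2 := s!(m+1)], Some (oo!(m+2)))"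
      by (rule inv_branch) (use len J1 J3 m oo s1 in auto)
    thus ?thesis using st s2 m(1) by simp
  next
    case notp: False
    show ?thesis
    proof (cases "occurs_at pat_q oo (i-2)")
      case True
      then obtain m where m: "i = m+3" "m+4 \<le> ?n" and r: "reduction [oo!m, oo!(m+1), oo!(m+2), oo!(m+3)] = pat_q"
      proof -
        from True have a: "1 \<le> i-2" "i-2+3 \<le> ?n" "reduction [oo!(i-2-1), oo!(i-2), oo!(i-2+1), oo!(i-2+2)] = pat_q"
            unfolding occurs_nth by auto
        have "\<exists>m. i = m+3" using a(1) by arith
        then obtain m where i3: "i = m+3" by blast
        show ?thesis using that[of m] a unfolding i3 by (simp add: numeral_eq_Suc)
      qed
      have oo: "oo!m < oo!(m+1)" "oo!(m+1) = oo!(m+2)" "oo!(m+2) < oo!(m+3)" using red_q[OF r] by auto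
      have st: "stepA oo (s,l) i = (s[m+2 := s!m], Some (s!(m+2)))"
        using True notp m unfolding stepA_def by simp
      have s2: "s!(m+2) = oo!(m+2)" using J1 m by simp
      have s1: "s!m < oo!(m+3)" using J3[of "m"] m oo by auto
      have "Inv oo (m+3) (s[m+2 := s!m], Some (oo!(m+2)))"
        by (rule inv_branch) (use len J1 J3 m oo s1 in auto)
      thus ?thesis using st s2 m(1) by simp
    next
      case notq: False
      show ?thesis
      proof (cases "(occurs_at pat_p s (i-2) \<or> occurs_at pat_q s (i-2)) \<and> l \<noteq> None")
        case True
        then obtain v where v: "l = Some v" by auto
        from True have sp: "occurs_at pat_p s (i-2) \<or> occurs_at pat_q s (i-2)" by simp
        then obtain m where m: "i = m+3" "m+4 \<le> ?n"
          and w: "s!m < s!(m+3)" "s!(m+1) < s!(m+3)" "s!(m+2) < s!(m+3)"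
        proof -
          from pq_s[OF \<open>occurs_at pat_p s (i-2) \<or> occurs_at pat_q s (i-2)\<close>] len
          have a: "1 \<le> i-2" "i-2+3 \<le> ?n" "s!(i-2-1) < s!(i-2+2)" "s!(i-2) < s!(i-2+2)" "s!(i-2+1) < s!(i-2+2)"
            by auto
          have "\<exists>m. i = m+3" using a(1) by arith
          then obtain m where i3: "i = m+3" by blast
          show ?thesis using that[of m] a unfolding i3 by (simp add: numeral_eq_Suc)
        qed
        have s2: "s!(m+2) = oo!(m+2)" "s!(m+3) = oo!(m+3)" using J1 m by simp_all
        have st0: "stepA oo (s,l) i = (s[i-1 := v], Some (s!(i-1)))"
          using True notp notq v unfolding stepA_def Let_def by simp
        have st: "stepA oo (s,l) i = (s[m+2 := v], Some (s!(m+2)))"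
          using st0 m(1) by simp
        have vb: "v < oo!(m+3)"
        proof -
          have "(?n \<le> m+2 \<or> (m+2 < ?n \<and> v < oo!(m+2))
            \<or> (1 \<le> m+2 \<and> v < s!(m+1) \<and> s!(m+1) = oo!(m+1))
            \<or> (2 \<le> m+2 \<and> s!(m+1) = oo!(m+1) \<and> s!m = oo!m))" using L[OF v] m(1) by simp
          moreover
          have False if "s!(m+1) = oo!(m+1)" "s!m = oo!m"
          proof -
            have "[s!m, s!(m+1), s!(m+2), s!(m+3)] = [oo!m, oo!(m+1), oo!(m+2), oo!(m+3)]"
              using that s2 by simp
            hence "occurs_at P s (m+1) = occurs_at P oo (m+1)" for P
              using len unfolding occurs_nth3 by simp
            hence "occurs_at pat_p oo (i-2) \<or> occurs_at pat_q oo (i-2)"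
              using sp m(1) by simp
            thus False using notp notq by simp
          qed
          ultimately show ?thesis using m w s2 by auto
        qed
        have "Inv oo (m+3) (s[m+2 := v], Some (oo!(m+2)))"
          by (rule inv_branch) (use len J1 J3 m s2 w vb in auto)
        thus ?thesis using st s2 m(1) by simp
      next
        case False
        have st: "stepA oo (s,l) i = (s, l)"
          using False notp notq unfolding stepA_def Let_def by (auto split: option.splits)
        have s1: "s!(i-1) = oo!(i-1)" using J1 i by simp
        show ?thesis unfolding st Inv_def fst_conv snd_conv
        proof (intro conjI allI impI)
          fix v assume v: "l = Some v"
          show "?n \<le> i \<or> (i < ?n \<and> v < oo!i)
            \<or> (1 \<le> i \<and> v < s!(i-1) \<and> s!(i-1) = oo!(i-1))
            \<or> (2 \<le> i \<and> s!(i-1) = oo!(i-1) \<and> s!(i-2) = oo!(i-2))"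
          proof -
            have "(?n \<le> i-1 \<or> (i-1 < ?n \<and> v < oo!(i-1))
              \<or> (1 \<le> i-1 \<and> v < s!(i-2) \<and> s!(i-2) = oo!(i-2))
              \<or> (2 \<le> i-1 \<and> s!(i-2) = oo!(i-2) \<and> s!(i-3) = oo!(i-3)))"
              using L[OF v] by (simp add: numeral_eq_Suc)
            thus ?thesis
            proof (elim disjE)
              assume "?n \<le> i-1" thus ?thesis using i by simp
            next
              assume "i-1 < ?n \<and> v < oo!(i-1)" thus ?thesis using i s1 by simp
            next
              assume "1 \<le> i-1 \<and> v < s!(i-2) \<and> s!(i-2) = oo!(i-2)" thus ?thesis using i s1 by auto
            next
              assume "2 \<le> i-1 \<and> s!(i-2) = oo!(i-2) \<and> s!(i-3) = oo!(i-3)" thus ?thesis using i s1 by auto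
            qed
          qed
        qed (use len J1 J3 i in auto)
      qed
    qed
  qed
qed

lemma fold_inv: "j \<le> length oo \<Longrightarrow> Inv oo j (foldl (stepA oo) (oo, None) [1..<j+1])"
proof (induction j)
  case 0
  then show ?case by (simp add: Inv_def)
next
  case (Suc j)
  have "Inv oo (Suc j) (stepA oo (foldl (stepA oo) (oo, None) [1..<j+1]) (Suc j))"
    using step_inv[of "Suc j" oo] Suc by (metis diff_Suc_1 le_add1 plus_1_eq_Suc prod.collapse Suc_leD)
  thus ?case by simp
qed

theorem corollary2:
  fixes e :: "nat list"
  assumes "rev_inversion_seq e"
  shows "rev_inversion_seq (algA e)"
proof -
  define r where "r = fst (foldl (stepA e) (e, None) [1..<length e+1])"
  have I: "Inv e (length e) (foldl (stepA e) (e, None) [1..<length e+1])" by (rule fold_inv) simp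
  hence len: "length r = length e"
    and J: "\<And>t. t < length e \<Longrightarrow> r!t \<le> e!t \<or> (t+1 < length e \<and> r!t < e!(t+1))"
    unfolding Inv_def r_def by auto
  have b: "\<And>t. t < length e \<Longrightarrow> e!t + t < length e" using assms rev_inv_iff by blast
  have "r!t + t < length r" if t: "t < length r" for t
  proof -
    have t': "t < length e" using t len by simp
    from J[OF t'] show ?thesis
    proof
      assume "r!t \<le> e!t" thus ?thesis using b[OF t'] len by simp
    next
      assume h: "t+1 < length e \<and> r!t < e!(t+1)"
      thus ?thesis using b[of "t+1"] len by simp
    qed
  qed
  thus ?thesis unfolding rev_inv_iff algA_def r_def[symmetric] by blast
qed
end
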